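(* Under Assumptions 1 and 2 below, the sequence $U_n$ defined by $U_n=U_{n-1}-\eta_nAU_{n-1}+\eta_n\xi_n$ satisfies $\mathbb{E}\|U_n\|_2^2\lesssim n^{-\alpha}(1+\|U_0\|_2^2+\|\Delta_0\|_2^2)$.
   Context: Setting: $\zeta_1,\zeta_2,\ldots$ i.i.d. from a distribution $\Pi$; $f(x,\zeta)$ a loss differentiable in $x\in\mathbb{R}^d$; $F(x)=\mathbb{E}_{\zeta\sim\Pi}f(x,\zeta)$ with minimizer $x^*$; SGD iterates $x_n=x_{n-1}-\eta_n\nabla f(x_{n-1},\zeta_n)$ with $\eta_n=\eta n^{-\alpha}$, $\eta>0$, $\alpha\in(0,1)$; $\Delta_n=x_n-x^*$; $\xi_n=\nabla F(x_{n-1})-\nabla f(x_{n-1},\zeta_n)$; $\mathcal{F}_n=\sigma(\zeta_1,\ldots,\zeta_n)$, $\mathbb{E}_n=\mathbb{E}(\cdot\mid\mathcal{F}_n)$; $S=\mathbb{E}[\nabla f(x^*,\zeta)\nabla f(x^*,\zeta)^T]$. Assumption 1: $F$ is continuously differentiable and $\mu$-strongly convex with $\mu>0$, $\nabla F$ is $L_F$-Lipschitz, and $A=\nabla^2F(x^* )$ exists. Assumption 2: (i) $\mathbb{E}_{n-1}\xi_n=0$; (ii) $\mathbb{E}_{n-1}\xi_n\xi_n^T=S+\Sigma(\Delta_{n-1})$ where for some $\kappa\in\{1,2\}$ and constant $\Sigma_2>0$, $\|\Sigma(\Delta)\|\le\Sigma_2(\|\Delta\|_2^\kappa+\|\Delta\|_2^2)$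 and $|\mathrm{tr}\,\Sigma(\Delta)|\le\Sigma_2(\|\Delta\|_2^\kappa+\|\Delta\|_2^2)$; (iii) $\mathbb{E}_{n-1}\|\xi_n\|_2^4\le\Sigma_4(1+\|\Delta_{n-1}\|_2^4)$. $\lesssim$ means inequality up to a constant independent of $n$. *)

theory Defs
  imports "HOL-Analysis.Analysis" "HOL-Probability.Probability"
begin

definition strongly_convex :: "real \<Rightarrow> ('a::real_inner \<Rightarrow> real) \<Rightarrow> bool" where
  "strongly_convex \<mu> F \<longleftrightarrow> convex_on UNIV (\<lambda>x. F x - (\<mu> / 2) * (norm x)\<^sup>2)"

definition outer :: "real^'n \<Rightarrow> real^'n^'n" where
  "outer v = (\<chi> i j. v $ i * v $ j)"

primrec sgd_x :: "(real^'n \<Rightarrow> 'z \<Rightarrow> real^'n) \<Rightarrow> real \<Rightarrow> real \<Rightarrow> real^'n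
    \<Rightarrow> (nat \<Rightarrow> 'w \<Rightarrow> 'z) \<Rightarrow> nat \<Rightarrow> 'w \<Rightarrow> real^'n" where
  "sgd_x gf \<eta> \<alpha> x0 \<zeta> 0 \<omega> = x0"
| "sgd_x gf \<eta> \<alpha> x0 \<zeta> (Suc n) \<omega> =
     sgd_x gf \<eta> \<alpha> x0 \<zeta> n \<omega>
     - (\<eta> * real (Suc n) powr (- \<alpha>)) *\<^sub>R gf (sgd_x gf \<eta> \<alpha> x0 \<zeta> n \<omega>) (\<zeta> (Suc n) \<omega>)"

definition sgd_xi :: "(real^'n \<Rightarrow> real^'n) \<Rightarrow> (real^'n \<Rightarrow> 'z \<Rightarrow> real^'n) \<Rightarrow> real \<Rightarrow> real
    \<Rightarrow> real^'n \<Rightarrow> (nat \<Rightarrow> 'w \<Rightarrow> 'z) \<Rightarrow> nat \<Rightarrow> 'w \<Rightarrow> real^'n" where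
  "sgd_xi gF gf \<eta> \<alpha> x0 \<zeta> n \<omega> =
     gF (sgd_x gf \<eta> \<alpha> x0 \<zeta> (n - 1) \<omega>) - gf (sgd_x gf \<eta> \<alpha> x0 \<zeta> (n - 1) \<omega>) (\<zeta> n \<omega>)"

primrec sgd_U :: "(real^'n \<Rightarrow> real^'n) \<Rightarrow> (real^'n \<Rightarrow> 'z \<Rightarrow> real^'n) \<Rightarrow> real^'n^'n
    \<Rightarrow> real \<Rightarrow> real \<Rightarrow> real^'n \<Rightarrow> real^'n \<Rightarrow> (nat \<Rightarrow> 'w \<Rightarrow> 'z) \<Rightarrow> nat \<Rightarrow> 'w \<Rightarrow> real^'n" where
  "sgd_U gF gf A \<eta> \<alpha> x0 u0 \<zeta> 0 \<omega> = u0"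
| "sgd_U gF gf A \<eta> \<alpha> x0 u0 \<zeta> (Suc n) \<omega> =
     sgd_U gF gf A \<eta> \<alpha> x0 u0 \<zeta> n \<omega>
     - (\<eta> * real (Suc n) powr (- \<alpha>)) *\<^sub>R (A *v sgd_U gF gf A \<eta> \<alpha> x0 u0 \<zeta> n \<omega>)
     + (\<eta> * real (Suc n) powr (- \<alpha>)) *\<^sub>R sgd_xi gF gf \<eta> \<alpha> x0 \<zeta> (Suc n) \<omega>"

end

theory Submission
  imports Defs
begin


lemma powr_step_ineq:
  fixes \<alpha> :: real and n :: nat
  assumes "0 < \<alpha>" "\<alpha> < 1" "n \<ge> 1"
  shows "real n powr (-\<alpha>) - real (Suc n) powr (-\<alpha>) \<le> real (Suc n) powr (-\<alpha>) / real n"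
proof -
  have n0: "real n > 0" using assms by simp
  have "real n powr (1-\<alpha>) \<le> real (Suc n) powr (1-\<alpha>)"
    using assms by (intro powr_mono2) auto
  moreover have "real n powr (1-\<alpha>) = real n powr (-\<alpha>) * real n"
    using n0 powr_add[of "real n" "-\<alpha>" 1] by simp
  moreover have "real (Suc n) powr (1-\<alpha>) = real (Suc n) powr (-\<alpha>) * real (Suc n)"
    using powr_add[of "real (Suc n)" "-\<alpha>" 1] by (simp del: of_nat_Suc)
  ultimately have "real n powr (-\<alpha>) * real n \<le> real (Suc n) powr (-\<alpha>) * (real n + 1)" by (simp add: add.commute)
  then have "real n powr (-\<alpha>) * real n - real (Suc n) powr (-\<alpha>) * real n \<le> real (Suc n) powr (-\<alpha>)"
    by (simp add: algebra_simps)
  then have "(real n powr (-\<alpha>) - real (Suc n) powr (-\<alpha>)) * real n \<le> real (Suc n) powr (-\<alpha>)"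
    by (simp add: algebra_simps)
  then show ?thesis using n0 by (simp add: pos_le_divide_eq)
qed

lemma det_rate:
  fixes \<eta> \<alpha> \<mu> a :: real
  assumes eta: "\<eta> > 0" and al: "0 < \<alpha>" "\<alpha> < 1" and mu: "\<mu> > 0" and a: "a \<ge> \<mu>^2"
  shows "\<exists>C\<ge>0. \<forall>(u::nat\<Rightarrow>real) b. b \<ge> 0 \<longrightarrow> (\<forall>k. 0 \<le> u k) \<longrightarrow>
     (\<forall>k. u (Suc k) \<le> (1 - 2*(\<eta> * real (Suc k) powr -\<alpha>)*\<mu> + (\<eta> * real (Suc k) powr -\<alpha>)^2 * a) * u k
              + (\<eta> * real (Suc k) powr -\<alpha>)^2 * b) \<longrightarrow>
     (\<forall>n\<ge>1. u n \<le> C * real n powr -\<alpha> * (u 0 + b))"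
proof -
  have apos: "a > 0" using a mu by (meson less_le_trans zero_less_power)
  have pw1: "real k powr (-\<alpha>) \<le> 1" if "k \<ge> 1" for k :: nat
  proof -
    have "1 \<le> real k powr \<alpha>" using that al by (intro ge_one_powr_ge_zero) auto
    then show ?thesis by (simp add: powr_minus inverse_le_1_iff)
  qed
  have pwpos: "real k powr (-\<alpha>) > 0" if "k \<ge> 1" for k :: nat using that by simp
  have fnn: "0 \<le> 1 - 2*e*\<mu> + e^2 * a" for e :: real
  proof -
    have "e^2 * \<mu>^2 \<le> e^2 * a" using a by (intro mult_left_mono) auto
    moreover have "0 \<le> (1 - e*\<mu>)^2" by simp
    ultimately show ?thesis by (simp add: power2_eq_square algebra_simps)
  qed
  have lim1: "(\<lambda>k::nat. real k powr (-\<alpha>)) \<longlonglongrightarrow> 0"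
    using al by (intro tendsto_neg_powr filterlim_real_sequentially) auto
  have "\<forall>\<^sub>F k in sequentially. real k powr (-\<alpha>) < \<mu> / (\<eta> * a)"
    using order_tendstoD(2)[OF lim1, of "\<mu> / (\<eta> * a)"] eta apos mu by simp
  then obtain k0 where k0: "\<And>k. k \<ge> k0 \<Longrightarrow> real k powr (-\<alpha>) < \<mu> / (\<eta> * a)"
    unfolding eventually_sequentially by blast
  have lim2: "(\<lambda>k::nat. real k powr (\<alpha> - 1)) \<longlonglongrightarrow> 0"
    using al by (intro tendsto_neg_powr filterlim_real_sequentially) auto
  have "\<forall>\<^sub>F k in sequentially. real k powr (\<alpha> - 1) < \<eta> * \<mu> / 4"
    using order_tendstoD(2)[OF lim2, of "\<eta> * \<mu> / 4"] eta mu by simp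
  then obtain n1 where n1: "\<And>k. k \<ge> n1 \<Longrightarrow> real k powr (\<alpha> - 1) < \<eta> * \<mu> / 4"
    unfolding eventually_sequentially by blast
  define N where "N = max (max k0 n1) 1"
  define G where "G = 1 + \<eta>^2 * a + \<eta>^2"
  define C where "C = max (G^N * real N powr \<alpha>) (2*\<eta>/\<mu>)"
  have G1: "G \<ge> 1" unfolding G_def using apos by simp
  have N1: "N \<ge> 1" unfolding N_def by simp
  have C0: "C \<ge> 0" unfolding C_def using eta mu by (simp add: le_max_iff_disj)
  show ?thesis
  proof (intro exI[of _ C] conjI C0 allI impI)
    fix u :: "nat \<Rightarrow> real" and b :: real and n :: nat
    assume b: "b \<ge> 0" and u0: "\<forall>k. 0 \<le> u k" and rec: "\<forall>k. u (Suc k) \<le> (1 - 2*(\<eta> * real (Suc k) powr -\<alpha>)*\<mu> + (\<eta> * real (Suc k) powr -\<alpha>)^2 * a) * u k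
              + (\<eta> * real (Suc k) powr -\<alpha>)^2 * b" and n: "n \<ge> 1"
    define X where "X = u 0 + b"
    have X0: "X \<ge> 0" "b \<le> X" using u0 b unfolding X_def by auto
    have ph1: "u k \<le> G^k * X" for k
    proof (induction k)
      case 0 then show ?case using b by (simp add: X_def)
    next
      case (Suc k)
      define e where "e = \<eta> * real (Suc k) powr -\<alpha>"
      have e0: "0 < e" "e \<le> \<eta>" unfolding e_def using eta pw1[of "Suc k"] pwpos[of "Suc k"]
        by (auto intro: mult_le_cancel_left1[THEN iffD2] simp: mult_le_cancel_left1)
      have ee: "e^2 \<le> \<eta>^2" using e0 by (intro power_mono) auto
      have f: "1 - 2*e*\<mu> + e^2 * a \<le> 1 + \<eta>^2 * a"
      proof -
        have "e^2 * a \<le> \<eta>^2 * a" using ee apos by (intro mult_right_mono) auto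
        moreover have "0 \<le> e*\<mu>" using e0 mu by simp
        ultimately show ?thesis by linarith
      qed
      have Gk: "1 \<le> G^k" using G1 by simp
      have "u (Suc k) \<le> (1 - 2*e*\<mu> + e^2 * a) * u k + e^2 * b" using rec e_def by auto
      also have "\<dots> \<le> (1 + \<eta>^2 * a) * (G^k * X) + \<eta>^2 * (G^k * X)"
      proof (rule add_mono)
        show "(1 - 2*e*\<mu> + e^2 * a) * u k \<le> (1 + \<eta>^2 * a) * (G^k * X)"
          using f Suc.IH fnn[of e] u0 apos by (intro mult_mono) auto
        have "1 * X \<le> G ^ k * X" using X0 Gk by (intro mult_right_mono) auto
        then have "b \<le> G ^ k * X" using X0 by simp
        then show "e^2 * b \<le> \<eta>^2 * (G^k * X)" using ee b by (intro mult_mono) auto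
      qed
      also have "\<dots> = G^(Suc k) * X" unfolding G_def by (simp add: algebra_simps)
      finally show ?case .
    qed
    have CN: "G^N * X \<le> C * real N powr (-\<alpha>) * X"
    proof -
      have "G^N = (G^N * real N powr \<alpha>) * real N powr (-\<alpha>)"
        using N1 by (simp add: powr_minus)
      also have "\<dots> \<le> C * real N powr (-\<alpha>)"
        unfolding C_def by (intro mult_right_mono) auto
      finally show ?thesis using X0 by (intro mult_right_mono) auto
    qed
    have ph2: "u m \<le> C * real m powr (-\<alpha>) * X" if "N \<le> m" for m
      using that
    proof (induction m rule: dec_induct)
      case base
      then show ?case using ph1[of N] CN by linarith
    next
      case (step m)
      have m1: "m \<ge> 1" "m \<ge> n1" "Suc m \<ge> k0" using step N_def by auto
      define p where "p = real m powr (-\<alpha>)"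
      define q where "q = real (Suc m) powr (-\<alpha>)"
      define e where "e = \<eta> * q"
      have q0: "q > 0" unfolding q_def by simp
      have e0: "e > 0" unfolding e_def using eta q0 by simp
      have ea: "e * a \<le> \<mu>"
      proof -
        have "q < \<mu> / (\<eta> * a)" using k0[OF m1(3)] q_def by simp
        then have "q * (\<eta> * a) < \<mu>" using eta apos by (simp add: pos_less_divide_eq)
        then show ?thesis unfolding e_def by (simp add: algebra_simps)
      qed
      have f: "1 - 2*e*\<mu> + e^2 * a \<le> 1 - e * \<mu>"
      proof -
        have "e^2 * a = e * (e * a)" by (simp add: power2_eq_square)
        also have "\<dots> \<le> e * \<mu>" using ea e0 by (intro mult_left_mono) auto
        finally show ?thesis by (simp add: mult.commute)
      qed
      have pq: "p - q \<le> q / real m" unfolding p_def q_def using powr_step_ineq[OF al m1(1)] .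
      have qp: "q \<le> p" unfolding p_def q_def using m1 al
        by (intro powr_mono2') auto
      have key1: "1 / real m \<le> \<eta> * \<mu> / 2 * q"
      proof -
        have "real (Suc m) \<le> 2 * real m" using m1 by simp
        then have "(2 * real m) powr (-\<alpha>) \<le> q" unfolding q_def using al m1
          by (intro powr_mono2') auto
        moreover have "(2 * real m) powr (-\<alpha>) = 2 powr (-\<alpha>) * p"
          unfolding p_def by (simp add: powr_mult)
        moreover have "2 powr (-\<alpha>) \<ge> 1/2"
        proof -
          have "2 powr (-\<alpha>) \<ge> 2 powr (-1)" using al by (intro powr_mono) auto
          then show ?thesis by simp
        qed
        moreover have "(1/2) * p \<le> 2 powr (-\<alpha>) * p"
          using calculation(3) unfolding p_def by (intro mult_right_mono) auto
        ultimately have qp2: "p / 2 \<le> q" by simp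
        have lt: "real m powr (\<alpha> - 1) < \<eta> * \<mu> / 4" using n1 m1 by auto
        have mpos: "real m > 0" using m1 by simp
        have "1 / real m = real m powr (\<alpha> - 1) * p"
          unfolding p_def using mpos powr_add[of "real m" "\<alpha> - 1" "-\<alpha>"]
          by (simp add: powr_minus_divide)
        also have "\<dots> \<le> \<eta> * \<mu> / 4 * p"
          using lt p_def by (intro mult_right_mono) auto
        also have "\<dots> = \<eta> * \<mu> / 2 * (p / 2)" by simp
        also have "\<dots> \<le> \<eta> * \<mu> / 2 * q" using qp2 eta mu
          by (intro mult_left_mono) auto
        finally show ?thesis .
      qed
      have Cge: "2*\<eta>/\<mu> \<le> C" unfolding C_def by simp
      have h1: "C * p \<le> C * q + C * \<eta> * \<mu> * q^2 / 2"
      proof -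
        have "q / real m = q * (1 / real m)" by simp
        also have "\<dots> \<le> q * (\<eta> * \<mu> / 2 * q)" using key1 q0 by (intro mult_left_mono) auto
        also have "\<dots> = (\<eta> * \<mu> / 2) * q^2" by (simp add: power2_eq_square)
        finally have "p \<le> q + (\<eta> * \<mu> / 2) * q^2" using pq by linarith
        then have "C * p \<le> C * (q + (\<eta> * \<mu> / 2) * q^2)" using C0 by (intro mult_left_mono) auto
        then show ?thesis by (simp add: algebra_simps)
      qed
      have h2: "C * \<eta> * \<mu> * q^2 \<le> C * e * \<mu> * p"
      proof -
        have "q * q \<le> q * p" using qp q0 by (intro mult_left_mono) auto
        then have "(C * \<eta> * \<mu>) * (q * q) \<le> (C * \<eta> * \<mu>) * (q * p)"
          by (rule mult_left_mono) (use C0 eta mu in auto)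
        then show ?thesis unfolding e_def by (simp add: power2_eq_square algebra_simps)
      qed
      have h3: "e^2 \<le> C * \<eta> * \<mu> * q^2 / 2"
      proof -
        have "\<eta> \<le> C * \<mu> / 2" using Cge mu by (simp add: field_simps)
        then have "\<eta> * \<eta> \<le> (C * \<mu> / 2) * \<eta>" by (rule mult_right_mono) (use eta in auto)
        then have "(\<eta> * \<eta>) * q^2 \<le> ((C * \<mu> / 2) * \<eta>) * q^2" by (rule mult_right_mono) auto
        then show ?thesis unfolding e_def by (simp add: power2_eq_square algebra_simps)
      qed
      have "(1 - e*\<mu>) * (C * p) + e^2 = C * p - C * e * \<mu> * p + e^2" by (simp add: algebra_simps)
      then have key: "(1 - e*\<mu>) * (C * p) + e^2 \<le> C * q"
        using h1 h2 h3 by linarith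
      have um: "u m \<le> C * p * X" using step p_def by simp
      have "u (Suc m) \<le> (1 - 2*e*\<mu> + e^2 * a) * u m + e^2 * b" using rec e_def q_def by auto
      also have "\<dots> \<le> (1 - e*\<mu>) * (C * p * X) + e^2 * X"
      proof (intro add_mono)
        have "(1 - 2*e*\<mu> + e^2 * a) * u m \<le> (1 - 2*e*\<mu> + e^2 * a) * (C * p * X)"
          using um fnn by (intro mult_left_mono) auto
        also have "\<dots> \<le> (1 - e*\<mu>) * (C * p * X)"
          using f C0 X0 p_def by (intro mult_right_mono) auto
        finally show "(1 - 2*e*\<mu> + e^2 * a) * u m \<le> (1 - e*\<mu>) * (C * p * X)" .
        show "e^2 * b \<le> e^2 * X" using X0 by (intro mult_left_mono) auto
      qed
      also have "\<dots> = ((1 - e*\<mu>) * (C * p) + e^2) * X" by (simp add: algebra_simps)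
      also have "\<dots> \<le> C * q * X" using key X0 by (intro mult_right_mono) auto
      finally show ?case unfolding q_def .
    qed
    show "u n \<le> C * real n powr -\<alpha> * (u 0 + b)"
    proof (cases "N \<le> n")
      case True then show ?thesis using ph2 X_def by simp
    next
      case False
      have "u n \<le> G^n * X" by (rule ph1)
      also have "\<dots> \<le> G^N * X" using False G1 X0 by (intro mult_right_mono power_increasing) auto
      also have "\<dots> \<le> C * real N powr (-\<alpha>) * X" by (rule CN)
      also have "\<dots> \<le> C * real n powr (-\<alpha>) * X" using False n al C0 X0
        by (intro mult_right_mono mult_left_mono powr_mono2') auto
      finally show ?thesis unfolding X_def .
    qed
  qed
qed



lemma deriv_ge:
  fixes g :: "real \<Rightarrow> real"
  assumes d: "(g has_real_derivative D) (at 0)" and b: "\<forall>t. 0<t \<longrightarrow> t<1 \<longrightarrow> c*t \<le> g t - g 0"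
  shows "c \<le> D"
proof -
  have "((\<lambda>h. (g (0+h) - g 0)/h) \<longlongrightarrow> D) (at 0)" using d unfolding DERIV_def .
  then have "((\<lambda>h. (g h - g 0)/h) \<longlongrightarrow> D) (at 0)" by (simp only: add_0_left)
  then have l: "((\<lambda>h. (g h - g 0)/h) \<longlongrightarrow> D) (at_right 0)"
    using filterlim_at_split by blast
  have ev: "\<forall>\<^sub>F h in at_right 0. c \<le> (g h - g 0)/h"
    unfolding eventually_at_right_field
  proof (intro exI[of _ 1] conjI allI impI)
    fix y :: real assume "y > 0" "y < 1"
    then show "c \<le> (g y - g 0)/y" using b by (simp add: pos_le_divide_eq)
  qed simp
  have nb: "at_right (0::real) \<noteq> bot" by (rule trivial_limit_at_right_real)
  show ?thesis by (rule tendsto_lowerbound[OF l ev nb])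
qed

lemma line_deriv:
  fixes f :: "'a::real_inner \<Rightarrow> real"
  assumes "GDERIV f x :> d"
  shows "((\<lambda>t. f (x + t *\<^sub>R v)) has_real_derivative (inner v d)) (at 0)"
proof -
  have l: "((\<lambda>t::real. x + t *\<^sub>R v) has_derivative (\<lambda>t. t *\<^sub>R v)) (at 0)"
    by (auto intro!: derivative_eq_intros)
  have f: "(f has_derivative (\<lambda>h. inner h d)) (at ((\<lambda>t::real. x + t *\<^sub>R v) 0))"
    using assms by (simp add: gderiv_def)
  have "((\<lambda>t. f (x + t *\<^sub>R v)) has_derivative (\<lambda>t. inner (t *\<^sub>R v) d)) (at 0)"
    using has_derivative_compose[OF l f] by simp
  then show ?thesis unfolding has_field_derivative_def
    by (rule has_derivative_eq_rhs) (auto simp: fun_eq_iff)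
qed

lemma convex_tangent:
  fixes G :: "'a::real_inner \<Rightarrow> real"
  assumes c: "convex_on UNIV G" and d: "GDERIV G x :> dd"
  shows "G x + inner (y - x) dd \<le> G y"
proof -
  define g where "g t = - G (x + t *\<^sub>R (y - x))" for t
  have gd: "(g has_real_derivative (- inner (y - x) dd)) (at 0)"
    unfolding g_def by (intro DERIV_minus line_deriv d)
  have "- (G y - G x) \<le> - inner (y - x) dd"
  proof (rule deriv_ge[OF gd], intro allI impI)
    fix t :: real assume t: "0 < t" "t < 1"
    have eq: "x + t *\<^sub>R (y - x) = (1 - t) *\<^sub>R x + t *\<^sub>R y" by (simp add: algebra_simps)
    have "G ((1 - t) *\<^sub>R x + t *\<^sub>R y) \<le> (1 - t) * G x + t * G y"
      using convex_onD[OF c] t by auto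
    then show "- (G y - G x) * t \<le> g t - g 0" unfolding g_def eq by (simp add: algebra_simps)
  qed
  then show ?thesis by simp
qed

lemma gderiv_sqnorm: "GDERIV (\<lambda>x::'a::real_inner. c * (norm x)^2) x :> (2*c) *\<^sub>R x"
proof -
  have "((\<lambda>x::'a. inner x x) has_derivative (\<lambda>h. inner x h + inner h x)) (at x)"
    using has_derivative_inner[OF has_derivative_ident has_derivative_ident, of x UNIV] by simp
  then have "((\<lambda>x::'a. c * inner x x) has_derivative (\<lambda>h. c * (inner x h + inner h x))) (at x)"
    by (rule has_derivative_mult_right)
  then have "((\<lambda>x::'a. c * inner x x) has_derivative (\<lambda>h. inner h ((2*c) *\<^sub>R x))) (at x)"
    by (rule has_derivative_eq_rhs) (auto simp: fun_eq_iff inner_commute algebra_simps)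
  then show ?thesis unfolding gderiv_def power2_norm_eq_inner .
qed

lemma sc_mono:
  fixes F :: "'a::real_inner \<Rightarrow> real"
  assumes sc: "strongly_convex \<mu> F" and gr: "\<forall>x. GDERIV F x :> gF x"
  shows "\<mu> * (norm (y - x))^2 \<le> inner (y - x) (gF y - gF x)"
proof -
  define G where "G x = F x - (\<mu> / 2) * (norm x)^2" for x
  have c: "convex_on UNIV G" using sc unfolding strongly_convex_def G_def by simp
  have d: "GDERIV G z :> gF z - \<mu> *\<^sub>R z" for z
    unfolding G_def using GDERIV_diff[OF gr[rule_format] gderiv_sqnorm[of "\<mu>/2"]] by simp
  have 1: "G x + inner (y - x) (gF x - \<mu> *\<^sub>R x) \<le> G y" by (rule convex_tangent[OF c d])
  have 2: "G y + inner (x - y) (gF y - \<mu> *\<^sub>R y) \<le> G x" by (rule convex_tangent[OF c d])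
  have "0 \<le> inner (y - x) (gF y - \<mu> *\<^sub>R y) - inner (y - x) (gF x - \<mu> *\<^sub>R x)"
  proof -
    have "inner (x - y) (gF y - \<mu> *\<^sub>R y) = - inner (y - x) (gF y - \<mu> *\<^sub>R y)"
      by (metis inner_minus_left minus_diff_eq)
    then show ?thesis using 1 2 by linarith
  qed
  also have "\<dots> = inner (y - x) (gF y - gF x) - \<mu> * inner (y - x) (y - x)"
    by (simp add: inner_diff_right algebra_simps)
  finally show ?thesis by (simp add: power2_norm_eq_inner)
qed

lemma grad_zero_at_min:
  fixes F :: "'a::real_inner \<Rightarrow> real"
  assumes gr: "GDERIV F x :> d" and m: "\<forall>y. F x \<le> F y"
  shows "d = 0"
proof -
  define v where "v = - d"
  have "0 \<le> inner v d"
  proof (rule deriv_ge[OF line_deriv[OF gr]], intro allI impI)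
    fix t :: real show "0 * t \<le> F (x + t *\<^sub>R v) - F (x + 0 *\<^sub>R v)" using m by simp
  qed
  then have "inner d d = 0" using inner_ge_zero[of d] unfolding v_def by simp
  then show ?thesis by simp
qed

lemma hess_pos:
  fixes gF :: "'a::real_inner \<Rightarrow> 'a"
  assumes mono: "\<And>x y. \<mu> * (norm (y - x))^2 \<le> inner (y - x) (gF y - gF x)"
    and h: "(gF has_derivative L) (at x)"
  shows "\<mu> * (norm v)^2 \<le> inner v (L v)"
proof -
  define g where "g t = inner v (gF (x + t *\<^sub>R v))" for t
  have l: "((\<lambda>t::real. x + t *\<^sub>R v) has_derivative (\<lambda>t. t *\<^sub>R v)) (at 0)"
    by (auto intro!: derivative_eq_intros)
  have h': "(gF has_derivative L) (at ((\<lambda>t::real. x + t *\<^sub>R v) 0))" using h by simp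
  have lin: "linear L" using h by (simp add: has_derivative_linear)
  have "((\<lambda>t. gF (x + t *\<^sub>R v)) has_derivative (\<lambda>t. L (t *\<^sub>R v))) (at 0)"
    using has_derivative_compose[OF l h'] by simp
  then have "(g has_derivative (\<lambda>t. inner v (L (t *\<^sub>R v)))) (at 0)"
    unfolding g_def by (intro derivative_eq_intros) auto
  then have gd: "(g has_real_derivative inner v (L v)) (at 0)"
    unfolding has_field_derivative_def
    by (rule has_derivative_eq_rhs) (auto simp: fun_eq_iff linear_scale[OF lin])
  show ?thesis
  proof (rule deriv_ge[OF gd], intro allI impI)
    fix t :: real assume t: "0 < t" "t < 1"
    have "\<mu> * (norm (t *\<^sub>R v))^2 \<le> inner (t *\<^sub>R v) (gF (x + t *\<^sub>R v) - gF x)"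
      using mono[of "x + t *\<^sub>R v" x] by (simp only: add_diff_cancel_left')
    moreover have "inner (t *\<^sub>R v) (gF (x + t *\<^sub>R v) - gF x) = t * (g t - g 0)"
      unfolding g_def by (simp add: inner_diff_right right_diff_distrib)
    moreover have "\<mu> * (norm (t *\<^sub>R v))^2 = t * (\<mu> * (norm v)^2 * t)"
      using t by (simp add: power_mult_distrib power2_eq_square)
    ultimately have "t * (\<mu> * (norm v)^2 * t) \<le> t * (g t - g 0)" by linarith
    then show "\<mu> * (norm v)^2 * t \<le> g t - g 0" using t by simp
  qed
qed



lemma sq_am_gm: fixes y t :: real assumes "t > 0" shows "y^2 \<le> t/2 + y^4/(2*t)"
proof -
  have "0 \<le> (t - y^2)^2" by simp
  then have "2*t*y^2 \<le> t^2 + y^4" by (simp add: power2_eq_square algebra_simps power4_eq_xxxx)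
  then have "y^2 \<le> (t^2 + y^4)/(2*t)" using assms by (simp add: pos_le_divide_eq mult.commute mult.left_commute)
  also have "\<dots> = t/2 + y^4/(2*t)" using assms by (simp add: add_divide_distrib power2_eq_square)
  finally show ?thesis .
qed

lemma zint:
  fixes P :: "'z measure" and gf :: "real^'n \<Rightarrow> 'z \<Rightarrow> real^'n" and gF :: "real^'n \<Rightarrow> real^'n"
  assumes Pi: "prob_space P"
    and A2i: "\<forall>x. integrable P (gf x) \<and> (\<integral>z. gf x z \<partial>P) = gF x"
    and A2iii: "\<forall>x. (\<integral>\<^sup>+ z. ennreal (norm (gF x - gf x z) ^ 4) \<partial>P)
                    \<le> ennreal (\<Sigma>\<^sub>4 * (1 + norm (x - xstar) ^ 4))"
  shows "(\<integral>\<^sup>+z. ennreal (norm (w + c *\<^sub>R (gF x - gf x z)) ^ 2) \<partial>P)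
     \<le> ennreal (norm w ^ 2 + c^2 * ((1 + max \<Sigma>\<^sub>4 0)/2) * (1 + norm (x - xstar) ^ 2))"
proof -
  interpret prob_space P by (rule Pi)
  define \<xi> where "\<xi> z = gF x - gf x z" for z
  define t where "t = 1 + norm (x - xstar) ^ 2"
  define S where "S = max \<Sigma>\<^sub>4 0"
  have t0: "t > 0" unfolding t_def by (simp add: add_pos_nonneg)
  have S0: "S \<ge> 0" unfolding S_def by simp
  have intxi: "integrable P \<xi>" unfolding \<xi>_def using A2i by auto
  have mxi: "\<xi> \<in> borel_measurable P" using intxi by auto
  have mean: "(\<integral>z. \<xi> z \<partial>P) = 0" unfolding \<xi>_def using A2i
    by (subst Bochner_Integration.integral_diff) (auto simp: prob_space)
  have m4: "(\<integral>\<^sup>+ z. ennreal (norm (\<xi> z) ^ 4) \<partial>P) \<le> ennreal (S * (1 + norm (x - xstar) ^ 4))"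
  proof -
    have "ennreal (\<Sigma>\<^sub>4 * (1 + norm (x - xstar) ^ 4)) \<le> ennreal (S * (1 + norm (x - xstar) ^ 4))"
      unfolding S_def by (intro ennreal_leI mult_right_mono) (auto simp: add_nonneg_nonneg)
    then show ?thesis using A2iii unfolding \<xi>_def by (meson order_trans)
  qed
  have int4: "integrable P (\<lambda>z. norm (\<xi> z) ^ 4)"
  proof (rule integrableI_bounded)
    show "(\<lambda>z. norm (\<xi> z) ^ 4) \<in> borel_measurable P" using mxi by measurable
    have "(\<integral>\<^sup>+ z. ennreal (norm (norm (\<xi> z) ^ 4)) \<partial>P) = (\<integral>\<^sup>+ z. ennreal (norm (\<xi> z) ^ 4) \<partial>P)" by simp
    also have "\<dots> < \<infinity>" using le_less_trans[OF m4 ennreal_less_top] by simp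
    finally show "(\<integral>\<^sup>+ z. ennreal (norm (norm (\<xi> z) ^ 4)) \<partial>P) < \<infinity>" .
  qed
  have b4: "(\<integral>z. norm (\<xi> z) ^ 4 \<partial>P) \<le> S * (1 + norm (x - xstar) ^ 4)"
  proof -
    have "ennreal (\<integral>z. norm (\<xi> z) ^ 4 \<partial>P) = (\<integral>\<^sup>+ z. ennreal (norm (\<xi> z) ^ 4) \<partial>P)"
      by (rule nn_integral_eq_integral[symmetric, OF int4]) auto
    with m4 have "ennreal (\<integral>z. norm (\<xi> z) ^ 4 \<partial>P) \<le> ennreal (S * (1 + norm (x - xstar) ^ 4))" by simp
    then show ?thesis using S0 by (subst (asm) ennreal_le_iff) (auto simp: add_nonneg_nonneg)
  qed
  have pw: "norm (\<xi> z) ^ 2 \<le> t/2 + norm (\<xi> z) ^ 4 / (2*t)" for z by (rule sq_am_gm[OF t0])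
  have intb: "integrable P (\<lambda>z. t/2 + norm (\<xi> z) ^ 4 / (2*t))" using int4 by auto
  have int2: "integrable P (\<lambda>z. norm (\<xi> z) ^ 2)"
  proof (rule Bochner_Integration.integrable_bound[OF intb])
    show "(\<lambda>z. norm (\<xi> z) ^ 2) \<in> borel_measurable P" using mxi by measurable
    show "AE z in P. norm (norm (\<xi> z) ^ 2) \<le> norm (t/2 + norm (\<xi> z) ^ 4 / (2*t))"
      using pw t0 by (auto intro!: AE_I2 simp: abs_of_nonneg add_nonneg_nonneg)
  qed
  have b2: "(\<integral>z. norm (\<xi> z) ^ 2 \<partial>P) \<le> ((1 + S)/2) * t"
  proof -
    have "(\<integral>z. norm (\<xi> z) ^ 2 \<partial>P) \<le> (\<integral>z. t/2 + norm (\<xi> z) ^ 4 / (2*t) \<partial>P)"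
      by (rule Bochner_Integration.integral_mono[OF int2 intb]) (rule pw)
    also have "\<dots> = t/2 + (\<integral>z. norm (\<xi> z) ^ 4 \<partial>P) / (2*t)"
      using int4 by (simp add: prob_space)
    also have "\<dots> \<le> t/2 + (S * (1 + norm (x - xstar) ^ 4)) / (2*t)"
      using b4 t0 by (simp add: divide_right_mono)
    also have "\<dots> \<le> t/2 + (S * t^2) / (2*t)"
    proof -
      have "1 + norm (x - xstar) ^ 4 \<le> t^2" unfolding t_def
        by (simp add: power2_eq_square power4_eq_xxxx algebra_simps)
      then have "S * (1 + norm (x - xstar) ^ 4) \<le> S * t^2" using S0 by (rule mult_left_mono)
      then show ?thesis using t0 by (simp add: divide_right_mono)
    qed
    also have "\<dots> = ((1 + S)/2) * t" using t0 by (simp add: power2_eq_square field_simps)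
    finally show ?thesis .
  qed
  have pw2: "norm (w + c *\<^sub>R \<xi> z) ^ 2 = norm w ^ 2 + 2 * c * inner w (\<xi> z) + c^2 * norm (\<xi> z) ^ 2" for z
    unfolding power2_norm_eq_inner by (simp add: inner_add_left inner_add_right inner_commute power2_eq_square algebra_simps)
  have intm: "integrable P (\<lambda>z. norm w ^ 2 + 2 * c * inner w (\<xi> z) + c^2 * norm (\<xi> z) ^ 2)"
    using int2 intxi by auto
  have "(\<integral>\<^sup>+z. ennreal (norm (w + c *\<^sub>R \<xi> z) ^ 2) \<partial>P)
      = (\<integral>\<^sup>+z. ennreal (norm w ^ 2 + 2 * c * inner w (\<xi> z) + c^2 * norm (\<xi> z) ^ 2) \<partial>P)"
    by (simp only: pw2)
  also have "\<dots> = ennreal (\<integral>z. norm w ^ 2 + 2 * c * inner w (\<xi> z) + c^2 * norm (\<xi> z) ^ 2 \<partial>P)"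
    by (rule nn_integral_eq_integral[OF intm]) (auto simp flip: pw2)
  also have "(\<integral>z. norm w ^ 2 + 2 * c * inner w (\<xi> z) + c^2 * norm (\<xi> z) ^ 2 \<partial>P)
      = norm w ^ 2 + c^2 * (\<integral>z. norm (\<xi> z) ^ 2 \<partial>P)"
    using int2 intxi mean by (simp add: prob_space)
  also have "ennreal (norm w ^ 2 + c^2 * (\<integral>z. norm (\<xi> z) ^ 2 \<partial>P))
      \<le> ennreal (norm w ^ 2 + c^2 * ((1 + S)/2) * t)"
    using b2 by (intro ennreal_leI add_left_mono) (simp add: mult.assoc mult_left_mono)
  finally show ?thesis unfolding \<xi>_def t_def S_def .
qed



lemma indep_split:
  fixes \<zeta> :: "nat \<Rightarrow> 'w \<Rightarrow> 'z" and N :: "'b measure" and h :: "'b \<times> 'z \<Rightarrow> ennreal"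
  assumes M: "prob_space M" and Pi: "prob_space P"
    and ind: "prob_space.indep_vars M (\<lambda>_. P) \<zeta> {1..}"
    and dist: "distr M P (\<zeta> (Suc k)) = P"
    and g: "g \<in> measurable (PiM {1..<Suc k} (\<lambda>_. P)) N"
    and h: "h \<in> borel_measurable (N \<Otimes>\<^sub>M P)"
  shows "(\<integral>\<^sup>+\<omega>. h (g (restrict (\<lambda>i. \<zeta> i \<omega>) {1..<Suc k}), \<zeta> (Suc k) \<omega>) \<partial>M)
       = (\<integral>\<^sup>+\<omega>. \<integral>\<^sup>+z. h (g (restrict (\<lambda>i. \<zeta> i \<omega>) {1..<Suc k}), z) \<partial>P \<partial>M)"
proof -
  interpret M: prob_space M by (rule M)
  interpret P: prob_space P by (rule Pi)
  define R where "R \<omega> = restrict (\<lambda>i. \<zeta> i \<omega>) {1..<Suc k}" for \<omega>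
  define R' where "R' \<omega> = restrict (\<lambda>i. \<zeta> i \<omega>) {Suc k}" for \<omega>
  define PA where "PA = PiM {1..<Suc k} (\<lambda>_. P)"
  define PB where "PB = PiM {Suc k} (\<lambda>_. P)"
  define h' where "h' p = h (g (fst p), snd p (Suc k))" for p
  have iv: "M.indep_var PA R PB R'"
    unfolding R_def R'_def PA_def PB_def by (rule M.indep_var_restrict[OF ind]) auto
  then have rvR: "R \<in> measurable M PA" and rvR': "R' \<in> measurable M PB"
    and eq: "distr M PA R \<Otimes>\<^sub>M distr M PB R' = distr M (PA \<Otimes>\<^sub>M PB) (\<lambda>x. (R x, R' x))"
    unfolding M.indep_var_distribution_eq by auto
  interpret D2: prob_space "distr M PB R'" by (rule M.prob_space_distr[OF rvR'])
  have cB: "(\<lambda>w. w (Suc k)) \<in> measurable PB P" unfolding PB_def by (rule measurable_component_singleton) simp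
  have gA: "g \<in> measurable PA N" using g unfolding PA_def .
  have pm: "(\<lambda>x. (R x, R' x)) \<in> measurable M (PA \<Otimes>\<^sub>M PB)" using rvR rvR' by measurable
  have hm: "h' \<in> borel_measurable (PA \<Otimes>\<^sub>M PB)"
  proof -
    have "(\<lambda>p. (g (fst p), snd p (Suc k))) \<in> measurable (PA \<Otimes>\<^sub>M PB) (N \<Otimes>\<^sub>M P)"
      using gA cB by measurable
    then show ?thesis unfolding h'_def using measurable_compose[OF _ h] by blast
  qed
  have se: "sets (distr M PA R \<Otimes>\<^sub>M distr M PB R') = sets (PA \<Otimes>\<^sub>M PB)"
    by (intro sets_pair_measure_cong) auto
  have hm2: "h' \<in> borel_measurable (distr M PA R \<Otimes>\<^sub>M distr M PB R')"
    using hm measurable_cong_sets[OF se refl] by simp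
  have Z: "\<zeta> (Suc k) = (\<lambda>w. w (Suc k)) \<circ> R'" by (auto simp: R'_def fun_eq_iff)
  have rvZ: "\<zeta> (Suc k) \<in> measurable M P" unfolding Z using rvR' cB by (simp add: measurable_comp)
  have inner: "(\<integral>\<^sup>+w2. h' (w1, w2) \<partial>distr M PB R') = (\<integral>\<^sup>+z. h (g w1, z) \<partial>P)"
    if w1: "w1 \<in> space PA" for w1
  proof -
    have gw: "g w1 \<in> space N" using gA w1 by (rule measurable_space)
    have hz: "(\<lambda>z. h (g w1, z)) \<in> borel_measurable P" using measurable_compose_Pair1[OF gw h] .
    have "(\<lambda>w2. h' (w1, w2)) \<in> borel_measurable PB" unfolding h'_def
      using measurable_compose[OF cB hz] by simp
    then have "(\<integral>\<^sup>+w2. h' (w1, w2) \<partial>distr M PB R') = (\<integral>\<^sup>+\<omega>. h' (w1, R' \<omega>) \<partial>M)"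
      by (intro nn_integral_distr[OF rvR']) simp
    also have "\<dots> = (\<integral>\<^sup>+\<omega>. h (g w1, \<zeta> (Suc k) \<omega>) \<partial>M)" by (simp add: h'_def R'_def)
    also have "\<dots> = (\<integral>\<^sup>+z. h (g w1, z) \<partial>distr M P (\<zeta> (Suc k)))"
      by (rule nn_integral_distr[symmetric, OF rvZ]) (simp add: hz)
    finally show ?thesis using dist by simp
  qed
  have Hm: "(\<lambda>w1. \<integral>\<^sup>+z. h (g w1, z) \<partial>P) \<in> borel_measurable PA"
  proof -
    have "(\<lambda>v. \<integral>\<^sup>+z. h (v,z) \<partial>P) \<in> borel_measurable N"
      by (rule P.borel_measurable_nn_integral_fst[OF h])
    then show ?thesis using measurable_compose[OF gA] by blast
  qed
  have "(\<integral>\<^sup>+\<omega>. h (g (R \<omega>), \<zeta> (Suc k) \<omega>) \<partial>M) = (\<integral>\<^sup>+\<omega>. h' (R \<omega>, R' \<omega>) \<partial>M)"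
    by (simp add: h'_def R'_def)
  also have "\<dots> = (\<integral>\<^sup>+p. h' p \<partial>distr M (PA \<Otimes>\<^sub>M PB) (\<lambda>x. (R x, R' x)))"
    by (rule nn_integral_distr[symmetric, OF pm]) (simp add: hm)
  also have "\<dots> = (\<integral>\<^sup>+p. h' p \<partial>(distr M PA R \<Otimes>\<^sub>M distr M PB R'))" using eq by simp
  also have "\<dots> = (\<integral>\<^sup>+w1. \<integral>\<^sup>+w2. h' (w1,w2) \<partial>distr M PB R' \<partial>distr M PA R)"
    by (rule D2.nn_integral_fst[symmetric, OF hm2])
  also have "\<dots> = (\<integral>\<^sup>+w1. \<integral>\<^sup>+z. h (g w1, z) \<partial>P \<partial>distr M PA R)"
    by (rule nn_integral_cong) (simp add: inner)
  also have "\<dots> = (\<integral>\<^sup>+\<omega>. \<integral>\<^sup>+z. h (g (R \<omega>), z) \<partial>P \<partial>M)"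
    by (rule nn_integral_distr[OF rvR]) (simp add: Hm)
  finally show ?thesis unfolding R_def .
qed

lemma sgd_x_cong:
  "(\<forall>j\<in>{1..k}. \<zeta> j \<omega> = \<zeta>' j \<omega>') \<Longrightarrow> sgd_x gf \<eta> \<alpha> x0 \<zeta> k \<omega> = sgd_x gf \<eta> \<alpha> x0 \<zeta>' k \<omega>'"
  by (induction k) auto

lemma sgd_U_cong:
  "(\<forall>j\<in>{1..k}. \<zeta> j \<omega> = \<zeta>' j \<omega>') \<Longrightarrow> sgd_U gF gf A \<eta> \<alpha> x0 u0 \<zeta> k \<omega> = sgd_U gF gf A \<eta> \<alpha> x0 u0 \<zeta>' k \<omega>'"
proof (induction k)
  case 0 then show ?case by simp
next
  case (Suc k)
  have "sgd_x gf \<eta> \<alpha> x0 \<zeta> k \<omega> = sgd_x gf \<eta> \<alpha> x0 \<zeta>' k \<omega>'"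
    using Suc.prems by (intro sgd_x_cong) auto
  moreover have "\<zeta> (Suc k) \<omega> = \<zeta>' (Suc k) \<omega>'" using Suc.prems by auto
  ultimately show ?case using Suc by (auto simp: sgd_xi_def)
qed

lemma sgd_x_meas:
  assumes gf_meas: "(\<lambda>(x, z). gf x z) \<in> borel_measurable (borel \<Otimes>\<^sub>M P)"
  shows "k \<le> m \<Longrightarrow> (\<lambda>w. sgd_x gf \<eta> \<alpha> x0 (\<lambda>j w. w j) k w) \<in> borel_measurable (PiM {1..<Suc m} (\<lambda>_. P))"
proof (induction k)
  case 0 then show ?case by simp
next
  case (Suc k)
  have X: "(\<lambda>w. sgd_x gf \<eta> \<alpha> x0 (\<lambda>j w. w j) k w) \<in> borel_measurable (PiM {1..<Suc m} (\<lambda>_. P))"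
    using Suc by simp
  have c: "(\<lambda>w. w (Suc k)) \<in> measurable (PiM {1..<Suc m} (\<lambda>_. P)) P"
    using Suc.prems by (intro measurable_component_singleton) auto
  have "(\<lambda>w. (\<lambda>(x, z). gf x z) (sgd_x gf \<eta> \<alpha> x0 (\<lambda>j w. w j) k w, w (Suc k)))
      \<in> borel_measurable (PiM {1..<Suc m} (\<lambda>_. P))"
    by (rule measurable_compose[OF measurable_Pair[OF X c] gf_meas])
  then have "(\<lambda>w. gf (sgd_x gf \<eta> \<alpha> x0 (\<lambda>j w. w j) k w) (w (Suc k)))
      \<in> borel_measurable (PiM {1..<Suc m} (\<lambda>_. P))" by simp
  then show ?case using X by simp
qed

lemma sgd_U_meas:
  assumes gf_meas: "(\<lambda>(x, z). gf x z) \<in> borel_measurable (borel \<Otimes>\<^sub>M P)"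
    and gF_cont: "continuous_on UNIV gF"
  shows "k \<le> m \<Longrightarrow> (\<lambda>w. sgd_U gF gf A \<eta> \<alpha> x0 u0 (\<lambda>j w. w j) k w) \<in> borel_measurable (PiM {1..<Suc m} (\<lambda>_. P))"
proof (induction k)
  case 0 then show ?case by simp
next
  case (Suc k)
  have U: "(\<lambda>w. sgd_U gF gf A \<eta> \<alpha> x0 u0 (\<lambda>j w. w j) k w) \<in> borel_measurable (PiM {1..<Suc m} (\<lambda>_. P))"
    using Suc by simp
  have X: "(\<lambda>w. sgd_x gf \<eta> \<alpha> x0 (\<lambda>j w. w j) k w) \<in> borel_measurable (PiM {1..<Suc m} (\<lambda>_. P))"
    using Suc.prems by (intro sgd_x_meas[OF gf_meas]) simp
  have c: "(\<lambda>w. w (Suc k)) \<in> measurable (PiM {1..<Suc m} (\<lambda>_. P)) P"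
    using Suc.prems by (intro measurable_component_singleton) auto
  have "(\<lambda>w. (\<lambda>(x, z). gf x z) (sgd_x gf \<eta> \<alpha> x0 (\<lambda>j w. w j) k w, w (Suc k)))
      \<in> borel_measurable (PiM {1..<Suc m} (\<lambda>_. P))"
    by (rule measurable_compose[OF measurable_Pair[OF X c] gf_meas])
  then have G: "(\<lambda>w. gf (sgd_x gf \<eta> \<alpha> x0 (\<lambda>j w. w j) k w) (w (Suc k)))
      \<in> borel_measurable (PiM {1..<Suc m} (\<lambda>_. P))" by simp
  have gFm: "gF \<in> borel_measurable borel" by (rule borel_measurable_continuous_onI[OF gF_cont])
  have Am: "(\<lambda>v. A *v v) \<in> borel_measurable borel"
    by (rule borel_measurable_continuous_onI[OF linear_continuous_on[OF matrix_vector_mul_bounded_linear]])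
  have F: "(\<lambda>w. gF (sgd_x gf \<eta> \<alpha> x0 (\<lambda>j w. w j) k w)) \<in> borel_measurable (PiM {1..<Suc m} (\<lambda>_. P))"
    by (rule measurable_compose[OF X gFm])
  have AU: "(\<lambda>w. A *v sgd_U gF gf A \<eta> \<alpha> x0 u0 (\<lambda>j w. w j) k w) \<in> borel_measurable (PiM {1..<Suc m} (\<lambda>_. P))"
    by (rule measurable_compose[OF U Am])
  show ?case using U AU F G by (simp add: sgd_xi_def)
qed



lemma nn_lin2:
  assumes M: "prob_space M" and f: "f \<in> borel_measurable M" and g: "g \<in> borel_measurable M"
    and f0: "\<And>\<omega>. f \<omega> \<ge> 0" and g0: "\<And>\<omega>. g \<omega> \<ge> 0" and abc: "a \<ge> 0" "b \<ge> 0" "c \<ge> (0::real)"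
  shows "(\<integral>\<^sup>+\<omega>. ennreal (a * f \<omega> + b * g \<omega> + c) \<partial>M)
     = ennreal a * (\<integral>\<^sup>+\<omega>. ennreal (f \<omega>) \<partial>M) + ennreal b * (\<integral>\<^sup>+\<omega>. ennreal (g \<omega>) \<partial>M) + ennreal c"
proof -
  interpret prob_space M by (rule M)
  have "(\<integral>\<^sup>+\<omega>. ennreal (a * f \<omega> + b * g \<omega> + c) \<partial>M)
      = (\<integral>\<^sup>+\<omega>. ennreal a * ennreal (f \<omega>) + ennreal b * ennreal (g \<omega>) + ennreal c \<partial>M)"
    using f0 g0 abc by (intro nn_integral_cong) (simp add: ennreal_plus[symmetric] ennreal_mult add_nonneg_nonneg)
  also have "\<dots> = (\<integral>\<^sup>+\<omega>. ennreal a * ennreal (f \<omega>) + ennreal b * ennreal (g \<omega>) \<partial>M) + (\<integral>\<^sup>+\<omega>. ennreal c \<partial>M)"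
    using f g by (intro nn_integral_add) auto
  also have "(\<integral>\<^sup>+\<omega>. ennreal a * ennreal (f \<omega>) + ennreal b * ennreal (g \<omega>) \<partial>M)
      = (\<integral>\<^sup>+\<omega>. ennreal a * ennreal (f \<omega>) \<partial>M) + (\<integral>\<^sup>+\<omega>. ennreal b * ennreal (g \<omega>) \<partial>M)"
    using f g by (intro nn_integral_add) auto
  also have "(\<integral>\<^sup>+\<omega>. ennreal a * ennreal (f \<omega>) \<partial>M) = ennreal a * (\<integral>\<^sup>+\<omega>. ennreal (f \<omega>) \<partial>M)"
    using f by (intro nn_integral_cmult) auto
  also have "(\<integral>\<^sup>+\<omega>. ennreal b * ennreal (g \<omega>) \<partial>M) = ennreal b * (\<integral>\<^sup>+\<omega>. ennreal (g \<omega>) \<partial>M)"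
    using g by (intro nn_integral_cmult) auto
  finally show ?thesis by (simp add: emeasure_space_1)
qed

lemma zeta_meas:
  assumes M: "prob_space M" and ind: "prob_space.indep_vars M (\<lambda>_. P) \<zeta> {1..}" and i: "i \<ge> 1"
  shows "\<zeta> i \<in> measurable M P"
  using ind i by (auto simp: prob_space.indep_vars_def[OF M])

lemma R_meas:
  assumes M: "prob_space M" and ind: "prob_space.indep_vars M (\<lambda>_. P) \<zeta> {1..}"
  shows "(\<lambda>\<omega>. restrict (\<lambda>i. \<zeta> i \<omega>) {1..<Suc k}) \<in> measurable M (PiM {1..<Suc k} (\<lambda>_. P))"
  by (rule measurable_restrict) (use zeta_meas[OF M ind] in auto)

lemma X_meas:
  assumes M: "prob_space M" and ind: "prob_space.indep_vars M (\<lambda>_. P) \<zeta> {1..}"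
    and gf_meas: "(\<lambda>(x, z). gf x z) \<in> borel_measurable (borel \<Otimes>\<^sub>M P)"
  shows "(\<lambda>\<omega>. sgd_x gf \<eta> \<alpha> x0 \<zeta> k \<omega>) \<in> borel_measurable M"
proof -
  have "(\<lambda>\<omega>. sgd_x gf \<eta> \<alpha> x0 (\<lambda>j w. w j) k (restrict (\<lambda>i. \<zeta> i \<omega>) {1..<Suc k})) \<in> borel_measurable M"
    by (rule measurable_compose[OF R_meas[OF M ind] sgd_x_meas[OF gf_meas]]) simp
  moreover have "sgd_x gf \<eta> \<alpha> x0 (\<lambda>j w. w j) k (restrict (\<lambda>i. \<zeta> i \<omega>) {1..<Suc k}) = sgd_x gf \<eta> \<alpha> x0 \<zeta> k \<omega>" for \<omega>
    by (rule sgd_x_cong[symmetric]) auto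
  ultimately show ?thesis by simp
qed

lemma U_meas:
  assumes M: "prob_space M" and ind: "prob_space.indep_vars M (\<lambda>_. P) \<zeta> {1..}"
    and gf_meas: "(\<lambda>(x, z). gf x z) \<in> borel_measurable (borel \<Otimes>\<^sub>M P)"
    and gF_cont: "continuous_on UNIV gF"
  shows "(\<lambda>\<omega>. sgd_U gF gf A \<eta> \<alpha> x0 u0 \<zeta> k \<omega>) \<in> borel_measurable M"
proof -
  have "(\<lambda>\<omega>. sgd_U gF gf A \<eta> \<alpha> x0 u0 (\<lambda>j w. w j) k (restrict (\<lambda>i. \<zeta> i \<omega>) {1..<Suc k})) \<in> borel_measurable M"
    by (rule measurable_compose[OF R_meas[OF M ind] sgd_U_meas[OF gf_meas gF_cont]]) simp
  moreover have "sgd_U gF gf A \<eta> \<alpha> x0 u0 (\<lambda>j w. w j) k (restrict (\<lambda>i. \<zeta> i \<omega>) {1..<Suc k}) = sgd_U gF gf A \<eta> \<alpha> x0 u0 \<zeta> k \<omega>" for \<omega>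
    by (rule sgd_U_cong[symmetric]) auto
  ultimately show ?thesis by simp
qed

lemma one_step:
  fixes M :: "'w measure" and P :: "'z measure" and \<zeta> :: "nat \<Rightarrow> 'w \<Rightarrow> 'z"
    and gf :: "real^'n \<Rightarrow> 'z \<Rightarrow> real^'n" and gF :: "real^'n \<Rightarrow> real^'n"
    and \<Phi> :: "(real^'n) \<times> (real^'n) \<Rightarrow> real^'n"
  assumes M: "prob_space M" and Pi: "prob_space P"
    and ind: "prob_space.indep_vars M (\<lambda>_. P) \<zeta> {1..}"
    and dist: "\<forall>n\<ge>1. distr M P (\<zeta> n) = P"
    and gf_meas: "(\<lambda>(x, z). gf x z) \<in> borel_measurable (borel \<Otimes>\<^sub>M P)"
    and gF_cont: "continuous_on UNIV gF"
    and A2i: "\<forall>x. integrable P (gf x) \<and> (\<integral>z. gf x z \<partial>P) = gF x"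
    and A2iii: "\<forall>x. (\<integral>\<^sup>+ z. ennreal (norm (gF x - gf x z) ^ 4) \<partial>P)
                    \<le> ennreal (\<Sigma>\<^sub>4 * (1 + norm (x - xstar) ^ 4))"
    and \<Phi>m: "\<Phi> \<in> borel_measurable (borel \<Otimes>\<^sub>M borel)"
  shows "(\<integral>\<^sup>+\<omega>. ennreal (norm (\<Phi> (sgd_U gF gf A \<eta> \<alpha> x0 u0 \<zeta> k \<omega>, sgd_x gf \<eta> \<alpha> x0 \<zeta> k \<omega>)
            + c *\<^sub>R (gF (sgd_x gf \<eta> \<alpha> x0 \<zeta> k \<omega>) - gf (sgd_x gf \<eta> \<alpha> x0 \<zeta> k \<omega>) (\<zeta> (Suc k) \<omega>))) ^ 2) \<partial>M)
     \<le> (\<integral>\<^sup>+\<omega>. ennreal (norm (\<Phi> (sgd_U gF gf A \<eta> \<alpha> x0 u0 \<zeta> k \<omega>, sgd_x gf \<eta> \<alpha> x0 \<zeta> k \<omega>)) ^ 2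
            + c^2 * ((1 + max \<Sigma>\<^sub>4 0)/2) * (1 + norm (sgd_x gf \<eta> \<alpha> x0 \<zeta> k \<omega> - xstar) ^ 2)) \<partial>M)"
proof -
  define g where "g w = (sgd_U gF gf A \<eta> \<alpha> x0 u0 (\<lambda>j w. w j) k w, sgd_x gf \<eta> \<alpha> x0 (\<lambda>j w. w j) k w)" for w
  define R where "R \<omega> = restrict (\<lambda>i. \<zeta> i \<omega>) {1..<Suc k}" for \<omega>
  define h where "h q = ennreal (norm (\<Phi> (fst q) + c *\<^sub>R (gF (snd (fst q)) - gf (snd (fst q)) (snd q))) ^ 2)"
    for q :: "((real^'n) \<times> (real^'n)) \<times> 'z"
  have gR: "g (R \<omega>) = (sgd_U gF gf A \<eta> \<alpha> x0 u0 \<zeta> k \<omega>, sgd_x gf \<eta> \<alpha> x0 \<zeta> k \<omega>)" for \<omega>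
    unfolding g_def R_def by (auto intro!: sgd_U_cong sgd_x_cong)
  have gm: "g \<in> measurable (PiM {1..<Suc k} (\<lambda>_. P)) (borel \<Otimes>\<^sub>M borel)"
    unfolding g_def
    by (rule measurable_Pair) (rule sgd_U_meas[OF gf_meas gF_cont], simp, rule sgd_x_meas[OF gf_meas], simp)
  have gFm: "gF \<in> borel_measurable borel" by (rule borel_measurable_continuous_onI[OF gF_cont])
  have m1: "(\<lambda>q::((real^'n) \<times> (real^'n)) \<times> 'z. snd (fst q)) \<in> borel_measurable ((borel \<Otimes>\<^sub>M borel) \<Otimes>\<^sub>M P)"
    by measurable
  have m2: "(\<lambda>q::((real^'n) \<times> (real^'n)) \<times> 'z. snd q) \<in> measurable ((borel \<Otimes>\<^sub>M borel) \<Otimes>\<^sub>M P) P"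
    by measurable
  have mgf: "(\<lambda>q::((real^'n) \<times> (real^'n)) \<times> 'z. gf (snd (fst q)) (snd q)) \<in> borel_measurable ((borel \<Otimes>\<^sub>M borel) \<Otimes>\<^sub>M P)"
    using measurable_compose[OF measurable_Pair[OF m1 m2] gf_meas] by simp
  have mgF: "(\<lambda>q::((real^'n) \<times> (real^'n)) \<times> 'z. gF (snd (fst q))) \<in> borel_measurable ((borel \<Otimes>\<^sub>M borel) \<Otimes>\<^sub>M P)"
    using measurable_compose[OF m1 gFm] .
  have mPhi: "(\<lambda>q::((real^'n) \<times> (real^'n)) \<times> 'z. \<Phi> (fst q)) \<in> borel_measurable ((borel \<Otimes>\<^sub>M borel) \<Otimes>\<^sub>M P)"
    using measurable_compose[OF measurable_fst \<Phi>m, of P] by simp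
  have hm: "h \<in> borel_measurable ((borel \<Otimes>\<^sub>M borel) \<Otimes>\<^sub>M P)"
    unfolding h_def using mgf mgF mPhi by measurable
  have dk: "distr M P (\<zeta> (Suc k)) = P" using dist by simp
  have "(\<integral>\<^sup>+\<omega>. ennreal (norm (\<Phi> (sgd_U gF gf A \<eta> \<alpha> x0 u0 \<zeta> k \<omega>, sgd_x gf \<eta> \<alpha> x0 \<zeta> k \<omega>)
            + c *\<^sub>R (gF (sgd_x gf \<eta> \<alpha> x0 \<zeta> k \<omega>) - gf (sgd_x gf \<eta> \<alpha> x0 \<zeta> k \<omega>) (\<zeta> (Suc k) \<omega>))) ^ 2) \<partial>M)
      = (\<integral>\<^sup>+\<omega>. h (g (R \<omega>), \<zeta> (Suc k) \<omega>) \<partial>M)"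
    by (simp add: h_def gR)
  also have "\<dots> = (\<integral>\<^sup>+\<omega>. \<integral>\<^sup>+z. h (g (R \<omega>), z) \<partial>P \<partial>M)"
    unfolding R_def by (rule indep_split[OF M Pi ind dk gm hm])
  also have "\<dots> \<le> (\<integral>\<^sup>+\<omega>. ennreal (norm (\<Phi> (sgd_U gF gf A \<eta> \<alpha> x0 u0 \<zeta> k \<omega>, sgd_x gf \<eta> \<alpha> x0 \<zeta> k \<omega>)) ^ 2
            + c^2 * ((1 + max \<Sigma>\<^sub>4 0)/2) * (1 + norm (sgd_x gf \<eta> \<alpha> x0 \<zeta> k \<omega> - xstar) ^ 2)) \<partial>M)"
    unfolding h_def gR fst_conv snd_conv by (intro nn_integral_mono) (rule zint[OF Pi A2i A2iii])
  finally show ?thesis .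
qed



theorem lemma8:
  fixes M :: "'w measure" and P :: "'z measure"
    and \<zeta> :: "nat \<Rightarrow> 'w \<Rightarrow> 'z"
    and f :: "real^'n \<Rightarrow> 'z \<Rightarrow> real" and gf :: "real^'n \<Rightarrow> 'z \<Rightarrow> real^'n"
    and F :: "real^'n \<Rightarrow> real" and gF :: "real^'n \<Rightarrow> real^'n"
    and xstar :: "real^'n" and A :: "real^'n^'n"
    and S :: "real^'n^'n" and \<Sigma> :: "real^'n \<Rightarrow> real^'n^'n"
    and \<mu> L\<^sub>F \<eta> \<alpha> \<Sigma>\<^sub>2 \<Sigma>\<^sub>4 :: real and \<kappa> :: nat
  assumes M: "prob_space M" and Pi: "prob_space P"
    and iid_indep: "prob_space.indep_vars M (\<lambda>_. P) \<zeta> {1..}"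
    and iid_distr: "\<forall>n\<ge>1. distr M P (\<zeta> n) = P"
    and step: "\<eta> > 0" "0 < \<alpha>" "\<alpha> < 1"
    \<comment> \<open>the loss, its gradient in x, and F = E f\<close>
    and f_meas: "\<forall>x. f x \<in> borel_measurable P"
    and gf_meas: "(\<lambda>(x, z). gf x z) \<in> borel_measurable (borel \<Otimes>\<^sub>M P)"
    and f_diff: "\<forall>x z. GDERIV (\<lambda>y. f y z) x :> gf x z"
    and F_int: "\<forall>x. integrable P (f x)"
    and F_def: "\<forall>x. F x = (\<integral>z. f x z \<partial>P)"
    \<comment> \<open>Assumption 1\<close>
    and F_grad: "\<forall>x. GDERIV F x :> gF x"
    and gF_cont: "continuous_on UNIV gF"
    and mu_pos: "\<mu> > 0"
    and F_sc: "strongly_convex \<mu> F"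
    and gF_lip: "L\<^sub>F-lipschitz_on UNIV gF"
    and xstar_min: "\<forall>x. F xstar \<le> F x"
    and hessian: "(gF has_derivative (\<lambda>h. A *v h)) (at xstar)"
    \<comment> \<open>Assumption 2 (i)\<close>
    and A2i: "\<forall>x. integrable P (gf x) \<and> (\<integral>z. gf x z \<partial>P) = gF x"
    \<comment> \<open>Assumption 2 (ii)\<close>
    and S_def: "S = (\<integral>z. outer (gf xstar z) \<partial>P)"
    and kappa: "\<kappa> \<in> {1, 2}" and Sigma2_pos: "\<Sigma>\<^sub>2 > 0"
    and A2ii: "\<forall>x. (\<integral>z. outer (gF x - gf x z) \<partial>P) = S + \<Sigma> (x - xstar)"
    and Sigma_norm: "\<forall>\<Delta>. onorm (\<lambda>v. \<Sigma> \<Delta> *v v) \<le> \<Sigma>\<^sub>2 * (norm \<Delta> ^ \<kappa> + norm \<Delta> ^ 2)"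
    and Sigma_trace: "\<forall>\<Delta>. \<bar>trace (\<Sigma> \<Delta>)\<bar> \<le> \<Sigma>\<^sub>2 * (norm \<Delta> ^ \<kappa> + norm \<Delta> ^ 2)"
    \<comment> \<open>Assumption 2 (iii)\<close>
    and A2iii: "\<forall>x. (\<integral>\<^sup>+ z. ennreal (norm (gF x - gf x z) ^ 4) \<partial>P)
                    \<le> ennreal (\<Sigma>\<^sub>4 * (1 + norm (x - xstar) ^ 4))"
  shows "\<exists>C. \<forall>x0 u0 n. n \<ge> 1 \<longrightarrow>
           (\<integral>\<^sup>+ \<omega>. ennreal (norm (sgd_U gF gf A \<eta> \<alpha> x0 u0 \<zeta> n \<omega>) ^ 2) \<partial>M)
             \<le> ennreal (C * real n powr (- \<alpha>) * (1 + norm u0 ^ 2 + norm (x0 - xstar) ^ 2))"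
proof -
  interpret Mp: prob_space M by (rule M)
  interpret Pp: prob_space P by (rule Pi)
  define K where "K = (1 + max \<Sigma>\<^sub>4 0)/2"
  have K0: "K \<ge> 0" unfolding K_def by simp
  obtain nA where nA: "nA > 0" "\<forall>v. norm (A *v v) \<le> norm v * nA"
    using bounded_linear.pos_bounded[OF matrix_vector_mul_bounded_linear[of A]] by blast
  have mono: "\<And>x y. \<mu> * (norm (y - x))^2 \<le> inner (y - x) (gF y - gF x)"
    using sc_mono[OF F_sc F_grad] by blast
  have g0: "gF xstar = 0" using grad_zero_at_min[of F xstar "gF xstar"] F_grad xstar_min by blast
  have hp: "\<And>v. \<mu> * (norm v)^2 \<le> inner v (A *v v)" using hess_pos[OF mono hessian] .
  have L0: "L\<^sub>F \<ge> 0" and lip: "\<And>x. norm (gF x - gF xstar) \<le> L\<^sub>F * norm (x - xstar)"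
    using gF_lip by (auto simp: lipschitz_on_def dist_norm)
  define aL where "aL = max (L\<^sub>F^2) (\<mu>^2)"
  define aU where "aU = max (nA^2) (\<mu>^2)"
  have fpos: "0 \<le> 1 - 2 * r * \<mu> + r^2 * q" if "q \<ge> \<mu>^2" for r q :: real
  proof -
    have "r^2 * \<mu>^2 \<le> r^2 * q" using that by (intro mult_left_mono) auto
    moreover have "0 \<le> (1 - r * \<mu>)^2" by simp
    ultimately show ?thesis by (simp add: power2_eq_square algebra_simps)
  qed
  have fD: "norm ((x - xstar) - st *\<^sub>R gF x)^2 \<le> (1 - 2* st * \<mu> + st^2 * aL) * norm (x - xstar)^2"
    if s0: "st \<ge> 0" for x :: "real^'n" and st :: real
  proof -
    define a where "a = x - xstar"
    define b where "b = gF x"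
    have e: "norm (a - st *\<^sub>R b)^2 = norm a^2 - 2 * st * inner a b + st^2 * norm b^2"
      unfolding power2_norm_eq_inner by (simp add: inner_diff_left inner_diff_right inner_commute power2_eq_square algebra_simps)
    have i1: "\<mu> * norm a^2 \<le> inner a b" using mono[of x xstar] g0 unfolding a_def b_def by simp
    have nb: "norm b \<le> L\<^sub>F * norm a" using lip[of x] g0 unfolding a_def b_def by simp
    have "norm b^2 \<le> (L\<^sub>F * norm a)^2" using nb by (intro power_mono) auto
    also have "\<dots> = L\<^sub>F^2 * norm a^2" by (simp add: power_mult_distrib)
    also have "\<dots> \<le> aL * norm a^2" unfolding aL_def by (intro mult_right_mono) auto
    finally have i2: "st^2 * norm b^2 \<le> st^2 * (aL * norm a^2)" by (intro mult_left_mono) auto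
    have i3: "2 * st * (\<mu> * norm a^2) \<le> 2 * st * inner a b" using i1 s0 by (intro mult_left_mono) auto
    have "norm (a - st *\<^sub>R b)^2 \<le> norm a^2 - 2 * st * (\<mu> * norm a^2) + st^2 * (aL * norm a^2)"
      unfolding e using i2 i3 by linarith
    also have "\<dots> = (1 - 2* st * \<mu> + st^2 * aL) * norm a^2" by (simp add: algebra_simps)
    finally show ?thesis unfolding a_def b_def .
  qed
  have fU: "norm (u - st *\<^sub>R (A *v u))^2 \<le> (1 - 2* st * \<mu> + st^2 * aU) * norm u^2"
    if s0: "st \<ge> 0" for u :: "real^'n" and st :: real
  proof -
    define b where "b = A *v u"
    have e: "norm (u - st *\<^sub>R b)^2 = norm u^2 - 2 * st * inner u b + st^2 * norm b^2"
      unfolding power2_norm_eq_inner by (simp add: inner_diff_left inner_diff_right inner_commute power2_eq_square algebra_simps)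
    have i1: "\<mu> * norm u^2 \<le> inner u b" using hp[of u] unfolding b_def .
    have nb: "norm b \<le> nA * norm u" using nA(2) unfolding b_def by (simp add: mult.commute)
    have "norm b^2 \<le> (nA * norm u)^2" using nb by (intro power_mono) auto
    also have "\<dots> = nA^2 * norm u^2" by (simp add: power_mult_distrib)
    also have "\<dots> \<le> aU * norm u^2" unfolding aU_def by (intro mult_right_mono) auto
    finally have i2: "st^2 * norm b^2 \<le> st^2 * (aU * norm u^2)" by (intro mult_left_mono) auto
    have i3: "2 * st * (\<mu> * norm u^2) \<le> 2 * st * inner u b" using i1 s0 by (intro mult_left_mono) auto
    have "norm (u - st *\<^sub>R b)^2 \<le> norm u^2 - 2 * st * (\<mu> * norm u^2) + st^2 * (aU * norm u^2)"
      unfolding e using i2 i3 by linarith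
    also have "\<dots> = (1 - 2* st * \<mu> + st^2 * aU) * norm u^2" by (simp add: algebra_simps)
    finally show ?thesis unfolding b_def .
  qed
  have aLK: "aL + K \<ge> \<mu>^2" unfolding aL_def using K0 by auto
  have aUm: "aU \<ge> \<mu>^2" unfolding aU_def by auto
  obtain CD where CD0: "CD \<ge> 0" and CD: "\<forall>(u::nat\<Rightarrow>real) b. b \<ge> 0 \<longrightarrow> (\<forall>k. 0 \<le> u k) \<longrightarrow>
     (\<forall>k. u (Suc k) \<le> (1 - 2*(\<eta> * real (Suc k) powr -\<alpha>) * \<mu> + (\<eta> * real (Suc k) powr -\<alpha>)^2 * (aL + K)) * u k
              + (\<eta> * real (Suc k) powr -\<alpha>)^2 * b) \<longrightarrow>
     (\<forall>n\<ge>1. u n \<le> CD * real n powr -\<alpha> * (u 0 + b))"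
    using det_rate[OF step(1) step(2) step(3) mu_pos aLK] by blast
  obtain CU where CU0: "CU \<ge> 0" and CU: "\<forall>(u::nat\<Rightarrow>real) b. b \<ge> 0 \<longrightarrow> (\<forall>k. 0 \<le> u k) \<longrightarrow>
     (\<forall>k. u (Suc k) \<le> (1 - 2*(\<eta> * real (Suc k) powr -\<alpha>) * \<mu> + (\<eta> * real (Suc k) powr -\<alpha>)^2 * aU) * u k
              + (\<eta> * real (Suc k) powr -\<alpha>)^2 * b) \<longrightarrow>
     (\<forall>n\<ge>1. u n \<le> CU * real n powr -\<alpha> * (u 0 + b))"
    using det_rate[OF step(1) step(2) step(3) mu_pos aUm] by blast
  define M1 where "M1 = max CD 1"
  define W where "W = 1 + K + K*M1*K + K*M1"
  have M10: "M1 \<ge> 1" unfolding M1_def by simp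
  have gFm: "gF \<in> borel_measurable borel" by (rule borel_measurable_continuous_onI[OF gF_cont])
  have Am: "(\<lambda>v. A *v v) \<in> borel_measurable borel"
    by (rule borel_measurable_continuous_onI[OF linear_continuous_on[OF matrix_vector_mul_bounded_linear]])
  show ?thesis
  proof (intro exI[of _ "CU * W"] allI impI)
    fix x0 u0 :: "real^'n" and n :: nat
    assume n: "n \<ge> 1"
    define X where "X k \<omega> = sgd_x gf \<eta> \<alpha> x0 \<zeta> k \<omega>" for k \<omega>
    define U where "U k \<omega> = sgd_U gF gf A \<eta> \<alpha> x0 u0 \<zeta> k \<omega>" for k \<omega>
    define st where "st k = \<eta> * real (Suc k) powr -\<alpha>" for k
    define ED where "ED k = (\<integral>\<^sup>+\<omega>. ennreal (norm (X k \<omega> - xstar)^2) \<partial>M)" for k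
    define EU where "EU k = (\<integral>\<^sup>+\<omega>. ennreal (norm (U k \<omega>)^2) \<partial>M)" for k
    have Xm: "(\<lambda>\<omega>. X k \<omega>) \<in> borel_measurable M" for k
      unfolding X_def by (rule X_meas[OF M iid_indep gf_meas])
    have Um: "(\<lambda>\<omega>. U k \<omega>) \<in> borel_measurable M" for k
      unfolding U_def by (rule U_meas[OF M iid_indep gf_meas gF_cont])
    have Dm: "(\<lambda>\<omega>. norm (X k \<omega> - xstar)^2) \<in> borel_measurable M" for k using Xm[of k] by measurable
    have Um2: "(\<lambda>\<omega>. norm (U k \<omega>)^2) \<in> borel_measurable M" for k using Um[of k] by measurable
    have s0: "st k \<ge> 0" for k unfolding st_def using step by simp
    have EDstep: "ED (Suc k) \<le> ennreal (1 - 2* st k * \<mu> + (st k)^2 * aL) * ED k + ennreal ((st k)^2 * K) * ED k + ennreal ((st k)^2 * K)" for k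
    proof -
      define \<Phi> where "\<Phi> p = snd p - xstar - st k *\<^sub>R gF (snd p)" for p :: "(real^'n) \<times> (real^'n)"
      have \<Phi>m: "\<Phi> \<in> borel_measurable (borel \<Otimes>\<^sub>M borel)" unfolding \<Phi>_def using gFm by measurable
      have eq: "X (Suc k) \<omega> - xstar = \<Phi> (U k \<omega>, X k \<omega>) + st k *\<^sub>R (gF (X k \<omega>) - gf (X k \<omega>) (\<zeta> (Suc k) \<omega>))" for \<omega>
        unfolding \<Phi>_def X_def st_def by (simp add: algebra_simps)
      have "ED (Suc k) = (\<integral>\<^sup>+\<omega>. ennreal (norm (\<Phi> (U k \<omega>, X k \<omega>) + st k *\<^sub>R (gF (X k \<omega>) - gf (X k \<omega>) (\<zeta> (Suc k) \<omega>)))^2) \<partial>M)"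
        unfolding ED_def eq ..
      also have "\<dots> \<le> (\<integral>\<^sup>+\<omega>. ennreal (norm (\<Phi> (U k \<omega>, X k \<omega>))^2 + (st k)^2 * K * (1 + norm (X k \<omega> - xstar)^2)) \<partial>M)"
        unfolding U_def X_def K_def by (rule one_step[OF M Pi iid_indep iid_distr gf_meas gF_cont A2i A2iii \<Phi>m])
      also have "\<dots> \<le> (\<integral>\<^sup>+\<omega>. ennreal ((1 - 2* st k * \<mu> + (st k)^2 * aL) * norm (X k \<omega> - xstar)^2 + (st k)^2 * K * norm (X k \<omega> - xstar)^2 + (st k)^2 * K) \<partial>M)"
      proof (intro nn_integral_mono ennreal_leI)
        fix \<omega>
        have "norm (\<Phi> (U k \<omega>, X k \<omega>))^2 \<le> (1 - 2* st k * \<mu> + (st k)^2 * aL) * norm (X k \<omega> - xstar)^2"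
          unfolding \<Phi>_def using fD[OF s0[of k], of "X k \<omega>"] by simp
        then show "norm (\<Phi> (U k \<omega>, X k \<omega>))^2 + (st k)^2 * K * (1 + norm (X k \<omega> - xstar)^2)
          \<le> (1 - 2* st k * \<mu> + (st k)^2 * aL) * norm (X k \<omega> - xstar)^2 + (st k)^2 * K * norm (X k \<omega> - xstar)^2 + (st k)^2 * K"
          by (simp add: algebra_simps)
      qed
      also have "\<dots> = ennreal (1 - 2* st k * \<mu> + (st k)^2 * aL) * ED k + ennreal ((st k)^2 * K) * ED k + ennreal ((st k)^2 * K)"
        unfolding ED_def
        by (rule nn_lin2[OF M Dm Dm]) (auto intro: fpos simp: aL_def K0)
      finally show ?thesis .
    qed
    have EUstep: "EU (Suc k) \<le> ennreal (1 - 2* st k * \<mu> + (st k)^2 * aU) * EU k + ennreal ((st k)^2 * K) * ED k + ennreal ((st k)^2 * K)" for k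
    proof -
      define \<Phi> where "\<Phi> p = fst p - st k *\<^sub>R (A *v fst p)" for p :: "(real^'n) \<times> (real^'n)"
      have \<Phi>m: "\<Phi> \<in> borel_measurable (borel \<Otimes>\<^sub>M borel)" unfolding \<Phi>_def using Am by measurable
      have eq: "U (Suc k) \<omega> = \<Phi> (U k \<omega>, X k \<omega>) + st k *\<^sub>R (gF (X k \<omega>) - gf (X k \<omega>) (\<zeta> (Suc k) \<omega>))" for \<omega>
        unfolding \<Phi>_def X_def U_def st_def by (simp add: sgd_xi_def)
      have "EU (Suc k) = (\<integral>\<^sup>+\<omega>. ennreal (norm (\<Phi> (U k \<omega>, X k \<omega>) + st k *\<^sub>R (gF (X k \<omega>) - gf (X k \<omega>) (\<zeta> (Suc k) \<omega>)))^2) \<partial>M)"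
        unfolding EU_def eq ..
      also have "\<dots> \<le> (\<integral>\<^sup>+\<omega>. ennreal (norm (\<Phi> (U k \<omega>, X k \<omega>))^2 + (st k)^2 * K * (1 + norm (X k \<omega> - xstar)^2)) \<partial>M)"
        unfolding U_def X_def K_def by (rule one_step[OF M Pi iid_indep iid_distr gf_meas gF_cont A2i A2iii \<Phi>m])
      also have "\<dots> \<le> (\<integral>\<^sup>+\<omega>. ennreal ((1 - 2* st k * \<mu> + (st k)^2 * aU) * norm (U k \<omega>)^2 + (st k)^2 * K * norm (X k \<omega> - xstar)^2 + (st k)^2 * K) \<partial>M)"
      proof (intro nn_integral_mono ennreal_leI)
        fix \<omega>
        have "norm (\<Phi> (U k \<omega>, X k \<omega>))^2 \<le> (1 - 2* st k * \<mu> + (st k)^2 * aU) * norm (U k \<omega>)^2"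
          unfolding \<Phi>_def using fU[OF s0[of k], of "U k \<omega>"] by simp
        then show "norm (\<Phi> (U k \<omega>, X k \<omega>))^2 + (st k)^2 * K * (1 + norm (X k \<omega> - xstar)^2)
          \<le> (1 - 2* st k * \<mu> + (st k)^2 * aU) * norm (U k \<omega>)^2 + (st k)^2 * K * norm (X k \<omega> - xstar)^2 + (st k)^2 * K"
          by (simp add: algebra_simps)
      qed
      also have "\<dots> = ennreal (1 - 2* st k * \<mu> + (st k)^2 * aU) * EU k + ennreal ((st k)^2 * K) * ED k + ennreal ((st k)^2 * K)"
        unfolding ED_def EU_def
        by (rule nn_lin2[OF M Um2 Dm]) (auto intro: fpos simp: aUm K0)
      finally show ?thesis .
    qed
    define d0 where "d0 = norm (x0 - xstar)^2"
    have ED0: "ED 0 = ennreal d0" unfolding ED_def X_def d0_def by (simp add: Mp.emeasure_space_1)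
    have EU0: "EU 0 = ennreal (norm u0^2)" unfolding EU_def U_def by (simp add: Mp.emeasure_space_1)
    have EDfin: "ED k < \<top>" for k
    proof (induction k)
      case 0 then show ?case using ED0 by simp
    next
      case (Suc k)
      have "ennreal (1 - 2* st k * \<mu> + (st k)^2 * aL) * ED k + ennreal ((st k)^2 * K) * ED k + ennreal ((st k)^2 * K) < \<top>"
        using Suc by (simp add: ennreal_mult_less_top)
      then show ?case using EDstep[of k] by (rule le_less_trans[rotated])
    qed
    have EUfin: "EU k < \<top>" for k
    proof (induction k)
      case 0 then show ?case using EU0 by simp
    next
      case (Suc k)
      have "ennreal (1 - 2* st k * \<mu> + (st k)^2 * aU) * EU k + ennreal ((st k)^2 * K) * ED k + ennreal ((st k)^2 * K) < \<top>"
        using Suc EDfin[of k] by (simp add: ennreal_mult_less_top)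
      then show ?case using EUstep[of k] by (rule le_less_trans[rotated])
    qed
    define d where "d k = enn2real (ED k)" for k
    define e where "e k = enn2real (EU k)" for k
    have EDd: "ED k = ennreal (d k)" for k unfolding d_def using EDfin[of k] by (simp add: ennreal_enn2real less_top)
    have EUe: "EU k = ennreal (e k)" for k unfolding e_def using EUfin[of k] by (simp add: ennreal_enn2real less_top)
    have d0': "d 0 = d0" unfolding d_def ED0 d0_def by simp
    have e0': "e 0 = norm u0^2" unfolding e_def EU0 by simp
    have dnn: "d k \<ge> 0" for k unfolding d_def by simp
    have enn: "e k \<ge> 0" for k unfolding e_def by simp
    have fDp: "0 \<le> 1 - 2* st k * \<mu> + (st k)^2 * aL" for k by (rule fpos) (simp add: aL_def)
    have fUp: "0 \<le> 1 - 2* st k * \<mu> + (st k)^2 * aU" for k by (rule fpos) (simp add: aUm)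
    have drec: "d (Suc k) \<le> (1 - 2* st k * \<mu> + (st k)^2 * (aL + K)) * d k + (st k)^2 * K" for k
    proof -
      have "ennreal (d (Suc k)) \<le> ennreal (1 - 2* st k * \<mu> + (st k)^2 * aL) * ennreal (d k) + ennreal ((st k)^2 * K) * ennreal (d k) + ennreal ((st k)^2 * K)"
        using EDstep[of k] unfolding EDd .
      also have "\<dots> = ennreal ((1 - 2* st k * \<mu> + (st k)^2 * aL) * d k + (st k)^2 * K * d k + (st k)^2 * K)"
        using fDp[of k] dnn[of k] K0 by (simp add: ennreal_mult ennreal_plus[symmetric] add_nonneg_nonneg)
      finally have "d (Suc k) \<le> (1 - 2* st k * \<mu> + (st k)^2 * aL) * d k + (st k)^2 * K * d k + (st k)^2 * K"
        using fDp[of k] dnn[of k] K0 by (subst (asm) ennreal_le_iff) (auto intro!: add_nonneg_nonneg)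
      then show ?thesis by (simp add: algebra_simps)
    qed
    have dCD: "\<forall>m\<ge>1. d m \<le> CD * real m powr -\<alpha> * (d 0 + K)"
      using CD[rule_format, of K d] K0 dnn drec unfolding st_def by blast
    define B where "B = M1 * (d0 + K)"
    have dB: "d k \<le> B" for k
    proof (cases "k \<ge> 1")
      case True
      have pw: "real k powr -\<alpha> \<le> 1" using True step by (simp add: powr_minus inverse_le_1_iff ge_one_powr_ge_zero)
      have dK: "0 \<le> d0 + K" using K0 d0_def by simp
      have "d k \<le> CD * real k powr -\<alpha> * (d0 + K)" using dCD True d0' by auto
      also have "\<dots> \<le> CD * 1 * (d0 + K)" using pw CD0 dK by (intro mult_right_mono mult_left_mono) auto
      also have "\<dots> \<le> M1 * (d0 + K)" unfolding M1_def using dK by (intro mult_right_mono) auto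
      finally show ?thesis unfolding B_def .
    next
      case False
      then have "k = 0" by simp
      then have "d k = d0" using d0' by simp
      also have "\<dots> \<le> 1 * (d0 + K)" using K0 by simp
      also have "\<dots> \<le> M1 * (d0 + K)" using M10 K0 d0_def by (intro mult_right_mono) auto
      finally show ?thesis unfolding B_def .
    qed
    have erec: "e (Suc k) \<le> (1 - 2* st k * \<mu> + (st k)^2 * aU) * e k + (st k)^2 * (K * (B + 1))" for k
    proof -
      have "ennreal (e (Suc k)) \<le> ennreal (1 - 2* st k * \<mu> + (st k)^2 * aU) * ennreal (e k) + ennreal ((st k)^2 * K) * ennreal (d k) + ennreal ((st k)^2 * K)"
        using EUstep[of k] unfolding EDd EUe .
      also have "\<dots> = ennreal ((1 - 2* st k * \<mu> + (st k)^2 * aU) * e k + (st k)^2 * K * d k + (st k)^2 * K)"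
        using fUp[of k] dnn[of k] enn[of k] K0 by (simp add: ennreal_mult ennreal_plus[symmetric] add_nonneg_nonneg)
      finally have "e (Suc k) \<le> (1 - 2* st k * \<mu> + (st k)^2 * aU) * e k + (st k)^2 * K * d k + (st k)^2 * K"
        using fUp[of k] dnn[of k] enn[of k] K0 by (subst (asm) ennreal_le_iff) (auto intro!: add_nonneg_nonneg)
      moreover have "(st k)^2 * K * d k \<le> (st k)^2 * K * B" using dB[of k] K0 by (intro mult_left_mono) auto
      ultimately show ?thesis by (simp add: algebra_simps)
    qed
    have Bnn: "B \<ge> 0" unfolding B_def d0_def using M10 K0 by simp
    have eCU: "\<forall>m\<ge>1. e m \<le> CU * real m powr -\<alpha> * (e 0 + K * (B + 1))"
      using CU[rule_format, of "K * (B + 1)" e] K0 Bnn enn erec unfolding st_def by auto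
    have fin: "e 0 + K * (B + 1) \<le> W * (1 + norm u0 ^ 2 + norm (x0 - xstar) ^ 2)"
    proof -
      have W1: "W \<ge> 1" unfolding W_def using K0 M10 by simp
      have W2: "K * M1 \<le> W" unfolding W_def using K0 M10 by simp
      have e0le: "norm u0^2 \<le> W * norm u0^2" using W1 by (simp add: mult_le_cancel_right1)
      have d0le: "K * M1 * d0 \<le> W * d0" using W2 d0_def by (intro mult_right_mono) auto
      have "e 0 + K * (B + 1) = norm u0^2 + K * M1 * d0 + (K * M1 * K + K)"
        unfolding e0' B_def by (simp add: algebra_simps)
      also have "\<dots> \<le> W * norm u0^2 + W * d0 + W" using e0le d0le mult_nonneg_nonneg[OF K0, of M1] M10 unfolding W_def by linarith
      finally show ?thesis unfolding d0_def by (simp add: algebra_simps)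
    qed
    have "(\<integral>\<^sup>+ \<omega>. ennreal (norm (sgd_U gF gf A \<eta> \<alpha> x0 u0 \<zeta> n \<omega>) ^ 2) \<partial>M) = ennreal (e n)"
      using EUe[of n] unfolding EU_def U_def .
    also have "\<dots> \<le> ennreal (CU * real n powr -\<alpha> * (e 0 + K * (B + 1)))"
      using eCU n by (intro ennreal_leI) auto
    also have "\<dots> \<le> ennreal (CU * real n powr -\<alpha> * (W * (1 + norm u0 ^ 2 + norm (x0 - xstar) ^ 2)))"
      using fin CU0 by (intro ennreal_leI mult_left_mono) auto
    also have "\<dots> = ennreal (CU * W * real n powr (- \<alpha>) * (1 + norm u0 ^ 2 + norm (x0 - xstar) ^ 2))"
      by (simp only: mult.assoc mult.commute mult.left_commute)
    finally show "(\<integral>\<^sup>+ \<omega>. ennreal (norm (sgd_U gF gf A \<eta> \<alpha> x0 u0 \<zeta> n \<omega>) ^ 2) \<partial>M)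
             \<le> ennreal (CU * W * real n powr (- \<alpha>) * (1 + norm u0 ^ 2 + norm (x0 - xstar) ^ 2))" .
  qed
qed


end
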